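(* Let $N, D \ge 1$, let $X \in \mathbb{R}^{N\times D}$ have rows $x_1,\ldots,x_N$, and let $\lambda^2 > 0$, $\rho^2 > 0$. For $\sigma^2 > 0$ set $\gamma = \exp(-\lambda^2/(2\sigma^2))$ and, for a feature allocation $(K^+, Z)$ and feature means $A \in \mathbb{R}^{K^+ \times D}$ (rows $\mu_1,\ldots,\mu_{K^+}$), define $$p(X,Z,A) = \frac{1}{(2\pi\sigma^2)^{ND/2}} \exp\Big\{-\frac{\operatorname{tr}((X-ZA)'(X-ZA))}{2\sigma^2}\Big\} \cdot \frac{\gamma^{K^+}\exp\{-\sum_{n=1}^N \gamma/n\}}{\prod_{h=1}^H \tilde K_h!} \prod_{k=1}^{K^+} S_{N,k}^{-1}\binom{N}{S_{N,k}}^{-1} \cdot \prod_{k=1}^{K^+} \mathcal{N}(\mu_k \mid 0, \rho^2 I_D).$$ Then for fixed $K^+, Z, A$, as $\sigma^2 \to 0$, $$-2\sigma^2 \log p(X,Z,A) \sim \operatorname{tr}\big[(X-ZA)'(X-ZA)\big] + K^+ \lambda^2,$$ and consequently finding the MAP estimate of $(K^+, Z, A)$ is asymptotically equivalent to solving $\operatorname{argmin}_{K^+, Z, A} \operatorname{tr}[(X-ZA)'(X-ZA)] + K^+\lambda^2$.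
   Context: A feature allocation consists of an integer $K^+ \ge 0$ and a binary matrix $Z = (z_{nk}) \in \{0,1\}^{N \times K^+}$ each of whose columns is nonzero (a data index may belong to any number of features, including none). $S_{N,k} = \sum_n z_{nk}$; $H$ is the number of distinct column vectors among the columns of $Z$, and $\tilde K_h$ is the number of columns equal to the $h$-th distinct column. The middle factor is the Indian buffet process probability of $Z$ with mass parameter $\gamma$. $\mathcal{N}(\cdot\mid m,\Sigma)$ is the Gaussian density. $f(\sigma^2)\sim g(\sigma^2)$ means $f(\sigma^2)/g(\sigma^2)\to 1$ as $\sigma^2 \to 0$. *)

theory Defs
  imports Complex_Main "HOL-Library.Landau_Symbols"
begin

text \<open>Matrices are represented by functions nat => nat => real with explicit
  (0-based) index bounds: X is N x D, Z is N x K, A is K x D.\<close>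

definition is_feature_allocation :: "nat \<Rightarrow> nat \<Rightarrow> (nat \<Rightarrow> nat \<Rightarrow> real) \<Rightarrow> bool" where
  "is_feature_allocation N K Z \<longleftrightarrow>
     (\<forall>n<N. \<forall>k<K. Z n k = 0 \<or> Z n k = 1) \<and> (\<forall>k<K. \<exists>n<N. Z n k \<noteq> 0)"

definition col :: "nat \<Rightarrow> (nat \<Rightarrow> nat \<Rightarrow> real) \<Rightarrow> nat \<Rightarrow> nat \<Rightarrow> real" where
  "col N Z k = (\<lambda>n. if n < N then Z n k else 0)"

definition S_col :: "nat \<Rightarrow> (nat \<Rightarrow> nat \<Rightarrow> real) \<Rightarrow> nat \<Rightarrow> nat" where
  "S_col N Z k = card {n. n < N \<and> Z n k = 1}"

text \<open>Product over the H distinct columns of (multiplicity of that column)!.\<close>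
definition dup_fact_prod :: "nat \<Rightarrow> nat \<Rightarrow> (nat \<Rightarrow> nat \<Rightarrow> real) \<Rightarrow> real" where
  "dup_fact_prod N K Z =
     (\<Prod>c\<in>col N Z ` {..<K}. real (fact (card {k. k < K \<and> col N Z k = c})))"

definition ibp_prob :: "real \<Rightarrow> nat \<Rightarrow> nat \<Rightarrow> (nat \<Rightarrow> nat \<Rightarrow> real) \<Rightarrow> real" where
  "ibp_prob \<gamma> N K Z =
     \<gamma> ^ K * exp (- (\<Sum>n=1..N. \<gamma> / real n)) / dup_fact_prod N K Z *
     (\<Prod>k<K. 1 / (real (S_col N Z k) * real (N choose S_col N Z k)))"

definition trace_res :: "nat \<Rightarrow> nat \<Rightarrow> nat \<Rightarrow> (nat \<Rightarrow> nat \<Rightarrow> real) \<Rightarrow> (nat \<Rightarrow> nat \<Rightarrow> real)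
    \<Rightarrow> (nat \<Rightarrow> nat \<Rightarrow> real) \<Rightarrow> real" where
  "trace_res N D K X Z A = (\<Sum>n<N. \<Sum>d<D. (X n d - (\<Sum>k<K. Z n k * A k d))\<^sup>2)"

definition gauss_iso :: "nat \<Rightarrow> real \<Rightarrow> (nat \<Rightarrow> real) \<Rightarrow> real" where
  "gauss_iso D \<rho>2 \<mu> = (2 * pi * \<rho>2) powr (- real D / 2) * exp (- (\<Sum>d<D. (\<mu> d)\<^sup>2) / (2 * \<rho>2))"

definition joint_p :: "nat \<Rightarrow> nat \<Rightarrow> real \<Rightarrow> real \<Rightarrow> real \<Rightarrow> (nat \<Rightarrow> nat \<Rightarrow> real) \<Rightarrow> nat
    \<Rightarrow> (nat \<Rightarrow> nat \<Rightarrow> real) \<Rightarrow> (nat \<Rightarrow> nat \<Rightarrow> real) \<Rightarrow> real" where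
  "joint_p N D lam2 \<rho>2 \<sigma>2 X K Z A =
     (let \<gamma> = exp (- lam2 / (2 * \<sigma>2)) in
      1 / (2 * pi * \<sigma>2) powr (real (N * D) / 2) * exp (- trace_res N D K X Z A / (2 * \<sigma>2))
      * ibp_prob \<gamma> N K Z
      * (\<Prod>k<K. gauss_iso D \<rho>2 (\<lambda>d. A k d)))"

end

theory Submission
  imports Defs "HOL-Real_Asymp.Real_Asymp"
begin

theorem mainTheorem3:
  fixes N D K :: nat and lam2 \<rho>2 :: real and X Z A :: "nat \<Rightarrow> nat \<Rightarrow> real"
  assumes "N \<ge> 1" and "D \<ge> 1" and "lam2 > 0" and "\<rho>2 > 0"
    and "is_feature_allocation N K Z"
    and "trace_res N D K X Z A + real K * lam2 \<noteq> 0"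
  shows "(\<lambda>\<sigma>2. - 2 * \<sigma>2 * ln (joint_p N D lam2 \<rho>2 \<sigma>2 X K Z A))
           \<sim>[at_right 0] (\<lambda>\<sigma>2. trace_res N D K X Z A + real K * lam2)"
proof -
  define T where "T = trace_res N D K X Z A"
  define dup where "dup = dup_fact_prod N K Z"
  define P where "P = (\<Prod>k<K. 1 / (real (S_col N Z k) * real (N choose S_col N Z k)))"
  define G where "G = (\<Prod>k<K. gauss_iso D \<rho>2 (\<lambda>d. A k d))"
  define H where "H = (\<Sum>n=1..N. 1 / real n)"
  define c where "c = ln dup - ln P - ln G"
  have dup_pos: "dup > 0" unfolding dup_def dup_fact_prod_def
    by (rule prod_pos) simp
  have S_ge: "S_col N Z k \<ge> 1" and S_le: "S_col N Z k \<le> N" if "k < K" for k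
  proof -
    from assms(5) that obtain n where n: "n < N" "Z n k \<noteq> 0"
      unfolding is_feature_allocation_def by blast
    with assms(5) that have "Z n k = 1" unfolding is_feature_allocation_def by blast
    have sub: "{n. n < N \<and> Z n k = 1} \<subseteq> {..<N}" by auto
    have fin: "finite {n. n < N \<and> Z n k = 1}" by (rule finite_subset[OF sub]) simp
    have "n \<in> {n. n < N \<and> Z n k = 1}" using n \<open>Z n k = 1\<close> by simp
    then have "card {n. n < N \<and> Z n k = 1} > 0" using fin card_gt_0_iff by blast
    then show "S_col N Z k \<ge> 1" unfolding S_col_def by simp
    show "S_col N Z k \<le> N" unfolding S_col_def using card_mono[OF _ sub] by simp
  qed
  have P_pos: "P > 0" unfolding P_def
  proof (rule prod_pos)
    fix k assume "k \<in> {..<K}"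
    then have "S_col N Z k \<ge> 1" "S_col N Z k \<le> N" using S_ge S_le by auto
    then show "0 < 1 / (real (S_col N Z k) * real (N choose S_col N Z k))"
      by (simp add: zero_less_binomial)
  qed
  have G_pos: "G > 0" unfolding G_def gauss_iso_def
    by (rule prod_pos) (use assms(4) in simp)
  have eq: "- 2 * s * ln (joint_p N D lam2 \<rho>2 s X K Z A)
      = T + real K * lam2 + s * (real (N*D) * ln (2*pi*s) + 2 * (exp (-lam2/(2*s)) * H) + 2*c)"
    if s: "s > 0" for s
  proof -
    define g where "g = exp (- lam2 / (2 * s))"
    have g_pos: "g > 0" unfolding g_def by simp
    have sumg: "(\<Sum>n=1..N. g / real n) = g * H" unfolding H_def
      by (simp add: sum_distrib_left)
    have jp: "joint_p N D lam2 \<rho>2 s X K Z A =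
       1 / (2 * pi * s) powr (real (N * D) / 2) * exp (- T / (2 * s))
       * (g ^ K * exp (- (\<Sum>n=1..N. g / real n)) / dup * P) * G"
      unfolding joint_p_def ibp_prob_def T_def dup_def P_def G_def g_def Let_def
      by (rule refl)
    have pw: "(2 * pi * s) powr (real (N * D) / 2) > 0" using s by simp
    have lnE: "ln (joint_p N D lam2 \<rho>2 s X K Z A) =
       - (real (N*D)/2 * ln (2*pi*s)) + (- T / (2 * s)) + (real K * (- lam2 / (2*s)) + - (g*H) - ln dup + ln P) + ln G"
      unfolding jp sumg using pw g_pos dup_pos P_pos G_pos s
      by (simp add: ln_mult ln_div ln_powr ln_realpow g_def)
    have "- 2 * s * ln (joint_p N D lam2 \<rho>2 s X K Z A) = - 2 * s * (- (real (N*D)/2 * ln (2*pi*s)) + (- T / (2 * s)) + (real K * (- lam2 / (2*s)) + - (g*H) - ln dup + ln P) + ln G)"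
      by (simp only: lnE)
    also have "\<dots> = T + real K * lam2 + s * (real (N*D) * ln (2*pi*s) + 2 * (g * H) + 2*c)"
      using s unfolding c_def by (simp add: field_simps)
    finally show ?thesis unfolding g_def .
  qed
  have lim: "((\<lambda>s. T + real K * lam2 + s * (real (N*D) * ln (2*pi*s) + 2 * (exp (-lam2/(2*s)) * H) + 2*c))
      \<longlongrightarrow> T + real K * lam2 + 0) (at_right 0)"
    apply (rule tendsto_add)
     apply simp
    using assms(3) by real_asymp
  have ev: "\<forall>\<^sub>F s in at_right 0. T + real K * lam2 + s * (real (N*D) * ln (2*pi*s) + 2 * (exp (-lam2/(2*s)) * H) + 2*c)
     = - 2 * s * ln (joint_p N D lam2 \<rho>2 s X K Z A)"
    by (rule eventually_mono[OF eventually_at_right_less]) (metis eq)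
  have "((\<lambda>s. - 2 * s * ln (joint_p N D lam2 \<rho>2 s X K Z A)) \<longlongrightarrow> T + real K * lam2) (at_right 0)"
    using tendsto_cong[OF ev] lim by simp
  then show ?thesis unfolding T_def
    by (rule tendsto_imp_asymp_equiv_const) (use assms(6) in simp)
qed

end
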